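(* Let $(W,S)$ be a finite Coxeter system and $K\subseteq S$. Suppose $w\in{}^K W$ is such that ${}^{S\setminus\{s\}}w=e$ for all $s\in S\setminus K$. Then $w=e$.
   Context: For $J\subseteq S$, $W_J$ is the parabolic subgroup generated by $J$, ${}^J w$ denotes the unique minimal-length element of the coset $W_Jw$, and ${}^J W=\{{}^J w:w\in W\}$. $e$ is the identity. *)

theory Defs
  imports "HOL-Algebra.Algebra"
begin

definition word_prod :: "('a, 'b) monoid_scheme \<Rightarrow> 'a list \<Rightarrow> 'a" where
  "word_prod G xs = foldr (\<lambda>x y. x \<otimes>\<^bsub>G\<^esub> y) xs \<one>\<^bsub>G\<^esub>"

text \<open>Coxeter system (W,S), defined by the Coxeter presentation:
  S is a generating set of involutions of the group W, and W has the universal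
  property of the group presented by generators S and relations (s t)^m(s,t) = 1,
  where m(s,t) is the order of s t.  The universal property is required for
  target groups whose carrier lives in the type 'a list; this suffices, since
  any subgroup generated by the image of S has cardinality at most that of the
  set of words over S.\<close>
definition coxeter_system :: "('a, 'b) monoid_scheme \<Rightarrow> 'a set \<Rightarrow> bool" where
  "coxeter_system W S \<longleftrightarrow>
     group W \<and> S \<subseteq> carrier W \<and> \<one>\<^bsub>W\<^esub> \<notin> S \<and>
     (\<forall>s\<in>S. s \<otimes>\<^bsub>W\<^esub> s = \<one>\<^bsub>W\<^esub>) \<and>
     generate W S = carrier W \<and>
     (\<forall>(H :: 'a list monoid) f. group H \<and> f \<in> S \<rightarrow> carrier H \<and>
        (\<forall>s\<in>S. \<forall>t\<in>S. \<forall>n::nat.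
            (s \<otimes>\<^bsub>W\<^esub> t) [^]\<^bsub>W\<^esub> n = \<one>\<^bsub>W\<^esub> \<longrightarrow>
            (f s \<otimes>\<^bsub>H\<^esub> f t) [^]\<^bsub>H\<^esub> n = \<one>\<^bsub>H\<^esub>)
      \<longrightarrow> (\<exists>h\<in>hom W H. \<forall>s\<in>S. h s = f s))"

definition cox_length :: "('a, 'b) monoid_scheme \<Rightarrow> 'a set \<Rightarrow> 'a \<Rightarrow> nat" where
  "cox_length W S w = (LEAST n. \<exists>xs. set xs \<subseteq> S \<and> length xs = n \<and> word_prod W xs = w)"

definition parabolic :: "('a, 'b) monoid_scheme \<Rightarrow> 'a set \<Rightarrow> 'a set" where
  "parabolic W J = generate W J"

definition min_rep :: "('a, 'b) monoid_scheme \<Rightarrow> 'a set \<Rightarrow> 'a set \<Rightarrow> 'a \<Rightarrow> 'a" where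
  "min_rep W S J w = (THE u. u \<in> parabolic W J #>\<^bsub>W\<^esub> w \<and>
      (\<forall>v \<in> parabolic W J #>\<^bsub>W\<^esub> w. v \<noteq> u \<longrightarrow> cox_length W S u < cox_length W S v))"

definition min_reps :: "('a, 'b) monoid_scheme \<Rightarrow> 'a set \<Rightarrow> 'a set \<Rightarrow> 'a set" where
  "min_reps W S J = {min_rep W S J w | w. w \<in> carrier W}"

end

theory Submission
  imports Defs
begin

lemma word_prod_Nil[simp]: "word_prod M [] = \<one>\<^bsub>M\<^esub>"
  by (simp add: word_prod_def)
lemma word_prod_Cons[simp]: "word_prod M (x#xs) = x \<otimes>\<^bsub>M\<^esub> word_prod M xs"
  by (simp add: word_prod_def)

lemma word_prod_carrier: "monoid M \<Longrightarrow> set xs \<subseteq> carrier M \<Longrightarrow> word_prod M xs \<in> carrier M"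
  by (induct xs) (auto intro: monoid.m_closed)

lemma word_prod_append: "monoid M \<Longrightarrow> set xs \<subseteq> carrier M \<Longrightarrow> set ys \<subseteq> carrier M
  \<Longrightarrow> word_prod M (xs@ys) = word_prod M xs \<otimes>\<^bsub>M\<^esub> word_prod M ys"
  by (induct xs) (auto simp: monoid.m_assoc word_prod_carrier)

lemma hom_word_prod: "group M \<Longrightarrow> group N \<Longrightarrow> h \<in> hom M N \<Longrightarrow> set xs \<subseteq> carrier M
  \<Longrightarrow> h (word_prod M xs) = word_prod N (map h xs)"
proof (induct xs)
  case Nil
  then show ?case using group_hom.hom_one[of M N h] by (simp add: group_hom_def group_hom_axioms_def)
next
  case (Cons a xs)
  then show ?case by (simp add: hom_mult word_prod_carrier group.is_monoid)
qed

lemma word_prod_replicate: "monoid M \<Longrightarrow> set xs \<subseteq> carrier M \<Longrightarrow>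
  word_prod M (concat (replicate n xs)) = (word_prod M xs) [^]\<^bsub>M\<^esub> n"
proof (induct n)
  case 0
  then show ?case by simp
next
  case (Suc n)
  have cc: "set (concat (replicate n xs)) \<subseteq> carrier M" using Suc by (cases n) auto
  then show ?case using Suc word_prod_append[OF _ _ cc] by (simp del: nat_pow_Suc add:  word_prod_carrier monoid.nat_pow_Suc2)
qed

definition transH :: "('g, 'z) monoid_scheme \<Rightarrow> ('g \<Rightarrow> 'c) \<Rightarrow> 'c monoid" where
  "transH G0 h = \<lparr>carrier = h ` carrier G0,
     monoid.mult = (\<lambda>x y. h (inv_into (carrier G0) h x \<otimes>\<^bsub>G0\<^esub> inv_into (carrier G0) h y)),
     one = h \<one>\<^bsub>G0\<^esub>\<rparr>"

lemma transport_group: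
  assumes G0: "group G0" and inj: "inj_on h (carrier G0)"
  defines "H \<equiv> transH G0 h"
  shows "group H \<and> h \<in> hom G0 H"
proof -
  interpret g: group G0 by (rule G0)
  have ii: "inv_into (carrier G0) h (h x) = x" if "x \<in> carrier G0" for x
    using inj that by (simp add: inv_into_f_f)
  have "group H"
  proof (rule groupI)
    show "x \<otimes>\<^bsub>H\<^esub> y \<in> carrier H" if "x \<in> carrier H" "y \<in> carrier H" for x y
      using that by (auto simp: H_def transH_def ii)
    show "\<one>\<^bsub>H\<^esub> \<in> carrier H" by (simp add: H_def transH_def)
    show "x \<otimes>\<^bsub>H\<^esub> y \<otimes>\<^bsub>H\<^esub> z = x \<otimes>\<^bsub>H\<^esub> (y \<otimes>\<^bsub>H\<^esub> z)"
      if "x \<in> carrier H" "y \<in> carrier H" "z \<in> carrier H" for x y z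
      using that by (auto simp: H_def transH_def ii g.m_assoc)
    show "\<one>\<^bsub>H\<^esub> \<otimes>\<^bsub>H\<^esub> x = x" if "x \<in> carrier H" for x
      using that by (auto simp: H_def transH_def ii)
    show "\<exists>y\<in>carrier H. y \<otimes>\<^bsub>H\<^esub> x = \<one>\<^bsub>H\<^esub>" if "x \<in> carrier H" for x
    proof -
      from that obtain a where a: "a \<in> carrier G0" "x = h a" by (auto simp: H_def transH_def)
      show ?thesis
        by (rule bexI[of _ "h (inv\<^bsub>G0\<^esub> a)"]) (auto simp: H_def transH_def a ii)
    qed
  qed
  moreover have "h \<in> hom G0 H"
    by (auto simp: hom_def H_def transH_def ii)
  ultimately show ?thesis by simp
qed


locale fcox = group G for G :: "('a,'b) monoid_scheme" (structure) +
  fixes S :: "'a set"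
  assumes cs: "coxeter_system G S" and fin: "finite (carrier G)"
begin

lemma S_carr: "S \<subseteq> carrier G" using cs by (simp add: coxeter_system_def)
lemma one_notin: "\<one> \<notin> S" using cs by (simp add: coxeter_system_def)
lemma ss[simp]: "s \<in> S \<Longrightarrow> s \<otimes> s = \<one>" using cs by (simp add: coxeter_system_def)
lemma gen_S: "generate G S = carrier G" using cs by (simp add: coxeter_system_def)
lemma sc[simp]: "s \<in> S \<Longrightarrow> s \<in> carrier G" using S_carr by auto
lemma inv_s[simp]: "s \<in> S \<Longrightarrow> inv s = s" using inv_equality[of s s] by simp
lemma ss2[simp]: "s \<in> S \<Longrightarrow> x \<in> carrier G \<Longrightarrow> s \<otimes> (s \<otimes> x) = x"
  by (simp flip: m_assoc)

abbreviation P where "P \<equiv> word_prod G"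
abbreviation l where "l \<equiv> cox_length G S"

lemma P_carr[simp]: "set xs \<subseteq> S \<Longrightarrow> P xs \<in> carrier G"
  using word_prod_carrier[OF is_monoid] S_carr by blast
lemma P_app: "set xs \<subseteq> S \<Longrightarrow> set ys \<subseteq> S \<Longrightarrow> P (xs @ ys) = P xs \<otimes> P ys"
  using word_prod_append[OF is_monoid] S_carr by blast
lemma P_rev: "set xs \<subseteq> S \<Longrightarrow> P (rev xs) = inv (P xs)"
proof (induct xs)
  case Nil then show ?case by simp
next
  case (Cons a xs)
  then show ?case by (simp add: P_app inv_mult_group)
qed

lemma gen_words: assumes J: "J \<subseteq> S" and w: "w \<in> generate G J" shows "\<exists>xs. set xs \<subseteq> J \<and> P xs = w"
  using w
proof (induct rule: generate.induct)
  case one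
  then show ?case by (auto intro: exI[of _ "[]"])
next
  case (incl h)
  then show ?case using J by (auto intro!: exI[of _ "[h]"])
next
  case (inv h)
  then show ?case using J by (auto intro!: exI[of _ "[h]"])
next
  case (eng h1 h2)
  then obtain xs ys where "set xs \<subseteq> J" "P xs = h1" "set ys \<subseteq> J" "P ys = h2" by auto
  then show ?case using J by (auto intro!: exI[of _ "xs @ ys"] simp: P_app)
qed

lemma words_gen: "set xs \<subseteq> J \<Longrightarrow> P xs \<in> generate G J"
proof (induct xs)
  case Nil then show ?case by (simp add: generate.one)
next
  case (Cons a xs)
  then show ?case using generate.eng[OF generate.incl[of a J G]] by auto
qed

lemma reduced_ex: "w \<in> carrier G \<Longrightarrow> \<exists>xs. set xs \<subseteq> S \<and> length xs = l w \<and> P xs = w"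
proof -
  assume w: "w \<in> carrier G"
  then obtain ys where ys: "set ys \<subseteq> S" "P ys = w" using gen_words[of S w] gen_S by auto
  have "\<exists>xs. set xs \<subseteq> S \<and> length xs = (LEAST n. \<exists>xs. set xs \<subseteq> S \<and> length xs = n \<and> P xs = w) \<and> P xs = w"
    by (rule LeastI[of _ "length ys"]) (use ys in auto)
  then show ?thesis by (simp add: cox_length_def)
qed

lemma l_le: "set xs \<subseteq> S \<Longrightarrow> l (P xs) \<le> length xs"
  unfolding cox_length_def by (rule Least_le) auto

lemma len_one: "l \<one> = 0"
  using l_le[of "[]"] by simp

lemma l_zero: "w \<in> carrier G \<Longrightarrow> l w = 0 \<Longrightarrow> w = \<one>"
  using reduced_ex[of w] by auto

lemma l_mult_le: "s \<in> S \<Longrightarrow> w \<in> carrier G \<Longrightarrow> l (s \<otimes> w) \<le> l w + 1"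
proof -
  assume s: "s \<in> S" and w: "w \<in> carrier G"
  obtain xs where xs: "set xs \<subseteq> S" "length xs = l w" "P xs = w" using reduced_ex[OF w] by blast
  show ?thesis using l_le[of "s # xs"] xs s by simp
qed

lemma l_mult_ge: "s \<in> S \<Longrightarrow> w \<in> carrier G \<Longrightarrow> l w \<le> l (s \<otimes> w) + 1"
  using l_mult_le[of s "s \<otimes> w"] by simp

end

context fcox
begin

primrec cntw :: "'a list \<Rightarrow> 'a \<Rightarrow> nat" where
  "cntw [] x = 0"
| "cntw (a # ws) x = (if x = a then 1 else 0) + cntw ws (a \<otimes> x \<otimes> a)"

lemma conj_iff: "a \<in> S \<Longrightarrow> x \<in> carrier G \<Longrightarrow> z \<in> carrier G \<Longrightarrow> (a \<otimes> x \<otimes> a = z) \<longleftrightarrow> (x = a \<otimes> z \<otimes> a)"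
  by (metis inv_s m_assoc m_closed sc inv_solve_left inv_solve_right)

lemma even_periodic:
  assumes c: "c \<in> carrier G" and cn: "c [^] (n::nat) = \<one>" and a: "a \<in> carrier G"
  shows "even (\<Sum>i<2*n. if x = c [^] i \<otimes> a then 1 else (0::nat))"
proof -
  define f where "f = (\<lambda>i::nat. if x = c [^] i \<otimes> a then 1 else (0::nat))"
  have per: "f (i + n) = f i" for i
  proof -
    have "c [^] (i + n) = c [^] i" using c cn by (simp flip: nat_pow_mult)
    then show ?thesis by (simp add: f_def)
  qed
  have "(\<Sum>i<2*n. f i) = sum f {0..<n} + sum f {n..<2*n}"
    by (simp add: atLeast0LessThan[symmetric] sum.atLeastLessThan_concat)
  also have "sum f {n..<2*n} = sum f {0+n..<n+n}" by (simp add: mult_2)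
  also have "\<dots> = sum (\<lambda>i. f (i + n)) {0..<n}" by (rule sum.shift_bounds_nat_ivl)
  also have "\<dots> = sum f {0..<n}" by (simp add: per)
  finally have "(\<Sum>i<2*n. f i) = 2 * sum f {0..<n}" by simp
  then show ?thesis by (simp add: f_def)
qed

lemma cnt_alt:
  assumes a: "a \<in> S" and b: "b \<in> S"
  shows "x \<in> carrier G \<Longrightarrow> cntw (concat (replicate n [a,b])) x =
     (\<Sum>i<2*n. if x = (a \<otimes> b) [^] i \<otimes> a then 1 else (0::nat))"
proof (induct n arbitrary: x)
  case 0
  then show ?case by simp
next
  case (Suc n)
  define f where "f = (\<lambda>i::nat. if x = (a \<otimes> b) [^] i \<otimes> a then 1 else (0::nat))"
  have xc: "x \<in> carrier G" by fact
  have yc: "b \<otimes> (a \<otimes> x \<otimes> a) \<otimes> b \<in> carrier G" using a b xc by simp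
  have e1: "(b \<otimes> (a \<otimes> x \<otimes> a) \<otimes> b = (a \<otimes> b) [^] i \<otimes> a) \<longleftrightarrow> (x = (a \<otimes> b) [^] Suc (Suc i) \<otimes> a)" for i
  proof -
    have zc: "(a \<otimes> b) [^] i \<otimes> a \<in> carrier G" using a b by simp
    have "(b \<otimes> (a \<otimes> x \<otimes> a) \<otimes> b = (a \<otimes> b) [^] i \<otimes> a) \<longleftrightarrow> (a \<otimes> x \<otimes> a = b \<otimes> ((a \<otimes> b) [^] i \<otimes> a) \<otimes> b)"
      using conj_iff[OF b _ zc, of "a \<otimes> x \<otimes> a"] a xc by simp
    also have "\<dots> \<longleftrightarrow> x = a \<otimes> (b \<otimes> ((a \<otimes> b) [^] i \<otimes> a) \<otimes> b) \<otimes> a"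
      using conj_iff[OF a xc] a b zc by simp
    also have "a \<otimes> (b \<otimes> ((a \<otimes> b) [^] i \<otimes> a) \<otimes> b) \<otimes> a = (a \<otimes> b) [^] Suc (Suc i) \<otimes> a"
    proof -
      have h1: "(a \<otimes> b) [^] Suc (Suc i) = (a \<otimes> b) [^] Suc i \<otimes> (a \<otimes> b)"
        by (rule nat_pow_Suc)
      have h2: "(a \<otimes> b) [^] Suc i = (a \<otimes> b) \<otimes> (a \<otimes> b) [^] i"
        using a b by (intro nat_pow_Suc2) simp
      have "(a \<otimes> b) [^] Suc (Suc i) = (a \<otimes> b) \<otimes> ((a \<otimes> b) [^] i \<otimes> (a \<otimes> b))"
        unfolding h1 h2 using a b by (simp add: m_assoc)
      then show ?thesis using a b by (simp add: m_assoc)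
    qed
    finally show ?thesis .
  qed
  have e0: "(x = a) \<longleftrightarrow> (x = (a \<otimes> b) [^] (0::nat) \<otimes> a)" using a by simp
  have e1': "(a \<otimes> x \<otimes> a = b) \<longleftrightarrow> (x = (a \<otimes> b) [^] (1::nat) \<otimes> a)"
    using conj_iff[OF a xc, of b] a b by (simp add: m_assoc)
  have "cntw (concat (replicate (Suc n) [a,b])) x =
     f 0 + (f 1 + (\<Sum>i<2*n. f (Suc (Suc i))))"
    using Suc.hyps[OF yc] e0 e1' e1 by (simp add: f_def)
  also have "\<dots> = (\<Sum>i<2*Suc n. f i)"
    by (simp add: sum.lessThan_Suc_shift del: sum.lessThan_Suc)
  finally show ?case by (simp add: f_def)
qed

end

context fcox
begin

definition XX :: "('a \<times> bool) set" where "XX = carrier G \<times> UNIV"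

definition pis :: "'a \<Rightarrow> ('a \<times> bool \<Rightarrow> 'a \<times> bool)" where
  "pis s = (\<lambda>p \<in> XX. (s \<otimes> fst p \<otimes> s, snd p \<noteq> (fst p = s)))"

abbreviation BG where "BG \<equiv> BijGroup XX"

lemma BG_group: "group BG" by (rule group_BijGroup)
lemma BG_carrier: "carrier BG = Bij XX" by (simp add: BijGroup_def)

lemma conj_s_eq: "s \<in> S \<Longrightarrow> x \<in> carrier G \<Longrightarrow> (s \<otimes> x \<otimes> s = s) \<longleftrightarrow> x = s"
  using conj_iff[of s x s] by (simp add: m_assoc)

lemma sx1: "s \<in> S \<Longrightarrow> x \<in> carrier G \<Longrightarrow> (s \<otimes> x = \<one>) = (x = s)"
  by (metis ss ss2 r_one sc)

lemma conj_conj: "s \<in> S \<Longrightarrow> x \<in> carrier G \<Longrightarrow> s \<otimes> (s \<otimes> x \<otimes> s) \<otimes> s = x"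
  by (simp add: m_assoc)

lemma pis_Bij: assumes s: "s \<in> S" shows "pis s \<in> Bij XX"
proof -
  have inv: "pis s (pis s p) = p" if "p \<in> XX" for p
    using that s by (auto simp: pis_def XX_def conj_s_eq conj_conj sx1)
  have img: "pis s ` XX \<subseteq> XX" using s by (auto simp: pis_def XX_def)
  have "bij_betw (pis s) XX XX"
    by (rule bij_betw_byWitness[where f'="pis s"]) (use inv img in auto)
  then show ?thesis by (simp add: Bij_def pis_def)
qed

lemma BG_mult: "f \<in> Bij XX \<Longrightarrow> g \<in> Bij XX \<Longrightarrow> p \<in> XX \<Longrightarrow> (g \<otimes>\<^bsub>BG\<^esub> f) p = g (f p)"
  by (simp add: BijGroup_def compose_def)

lemma BG_one: "p \<in> XX \<Longrightarrow> \<one>\<^bsub>BG\<^esub> p = p"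
  by (simp add: BijGroup_def)

definition A :: "'a list \<Rightarrow> ('a \<times> bool \<Rightarrow> 'a \<times> bool)" where
  "A ws = word_prod BG (map pis (rev ws))"

lemma map_pis_carr: "set ws \<subseteq> S \<Longrightarrow> set (map pis ws) \<subseteq> carrier BG"
  using pis_Bij by (auto simp: BG_carrier)

lemma A_Bij: "set ws \<subseteq> S \<Longrightarrow> A ws \<in> Bij XX"
  unfolding A_def using word_prod_carrier[OF group.is_monoid[OF BG_group], of "map pis (rev ws)"]
    map_pis_carr[of "rev ws"] by (simp add: BG_carrier)

lemma A_formula: "set ws \<subseteq> S \<Longrightarrow> x \<in> carrier G \<Longrightarrow>
   A ws (x, e) = (P (rev ws) \<otimes> x \<otimes> P ws, e \<noteq> odd (cntw ws x))"
proof (induct ws arbitrary: x e)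
  case Nil
  then show ?case using BG_one[of "(x,e)"] by (simp add: A_def XX_def)
next
  case (Cons a ws)
  have a: "a \<in> S" and ws: "set ws \<subseteq> S" using Cons.prems by auto
  have "A (a # ws) = A ws \<otimes>\<^bsub>BG\<^esub> (pis a \<otimes>\<^bsub>BG\<^esub> \<one>\<^bsub>BG\<^esub>)"
    unfolding A_def using word_prod_append[OF group.is_monoid[OF BG_group], of "map pis (rev ws)" "[pis a]"]
      map_pis_carr[of "rev ws"] map_pis_carr[of "[a]"] a ws by simp
  also have "pis a \<otimes>\<^bsub>BG\<^esub> \<one>\<^bsub>BG\<^esub> = pis a"
    using monoid.r_one[OF group.is_monoid[OF BG_group]] pis_Bij[OF a] BG_carrier by simp
  finally have "A (a # ws) (x, e) = A ws (pis a (x, e))"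
    using BG_mult[OF pis_Bij[OF a] A_Bij[OF ws]] Cons.prems by (simp add: XX_def)
  also have "\<dots> = A ws (a \<otimes> x \<otimes> a, e \<noteq> (x = a))"
    using Cons.prems by (simp add: pis_def XX_def)
  also have "\<dots> = (P (rev ws) \<otimes> (a \<otimes> x \<otimes> a) \<otimes> P ws, (e \<noteq> (x = a)) \<noteq> odd (cntw ws (a \<otimes> x \<otimes> a)))"
    using Cons.hyps[OF ws] a Cons.prems by simp
  also have "\<dots> = (P (rev (a # ws)) \<otimes> x \<otimes> P (a # ws), e \<noteq> odd (cntw (a # ws) x))"
    using a ws Cons.prems by (auto simp: P_app m_assoc)
  finally show ?case .
qed

end

lemma rev_alt: "rev (concat (replicate n [a,b])) = concat (replicate n [b,a])"
proof (induct n)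
  case 0 then show ?case by simp
next
  case (Suc n)
  have "concat (replicate n [b,a]) @ [b,a] = concat (replicate n [b,a] @ [[b,a]])" by simp
  also have "replicate n [b,a] @ [[b,a]] = [b,a] # replicate n [b,a]" by (simp add: replicate_append_same)
  finally show ?case using Suc by simp
qed

context fcox
begin

lemma finite_Bij: "finite (Bij XX)"
proof -
  have fX: "finite XX" using fin by (simp add: XX_def)
  have "Bij XX \<subseteq> PiE XX (\<lambda>_. XX)"
    by (auto simp: Bij_def PiE_iff bij_betw_def extensional_def)
  moreover have "finite (PiE XX (\<lambda>_. XX))" using fX by (intro finite_PiE) auto
  ultimately show ?thesis by (rule finite_subset)
qed

lemma pis_rel:
  assumes s: "s \<in> S" and t: "t \<in> S" and st: "(s \<otimes> t) [^] (n::nat) = \<one>"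
  shows "(pis s \<otimes>\<^bsub>BG\<^esub> pis t) [^]\<^bsub>BG\<^esub> n = \<one>\<^bsub>BG\<^esub>"
proof -
  define ws where "ws = concat (replicate n [t,s])"
  have wsS: "set ws \<subseteq> S" using s t by (cases n) (auto simp: ws_def)
  have mBG: "monoid BG" by (rule group.is_monoid[OF BG_group])
  have "(pis s \<otimes>\<^bsub>BG\<^esub> pis t) [^]\<^bsub>BG\<^esub> n = word_prod BG (concat (replicate n [pis s, pis t]))"
    using word_prod_replicate[OF mBG, of "[pis s, pis t]" n] pis_Bij[OF s] pis_Bij[OF t]
      monoid.r_one[OF mBG, of "pis t"] by (simp add: BG_carrier)
  also have "\<dots> = A ws"
    by (simp add: A_def ws_def rev_alt map_concat)
  finally have eq: "(pis s \<otimes>\<^bsub>BG\<^esub> pis t) [^]\<^bsub>BG\<^esub> n = A ws" .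
  have P1: "P (rev ws) = \<one>"
    using word_prod_replicate[OF is_monoid, of "[s,t]" n] s t st by (simp add: ws_def rev_alt)
  have ts: "t \<otimes> s = inv (s \<otimes> t)" using s t by (simp add: inv_mult_group)
  have P2: "P ws = \<one>"
    using word_prod_replicate[OF is_monoid, of "[t,s]" n] s t st
    by (simp add: ws_def ts nat_pow_inv)
  have ev: "even (cntw ws x)" if "x \<in> carrier G" for x
    using cnt_alt[OF t s that, of n] even_periodic[of "t \<otimes> s" n t x] s t st P2
      word_prod_replicate[OF is_monoid, of "[t,s]" n]
    by (simp add: ws_def)
  have "A ws = \<one>\<^bsub>BG\<^esub>"
  proof (rule extensionalityI[of _ XX])
    show "A ws \<in> extensional XX" using A_Bij[OF wsS] by (rule Bij_imp_extensional)
    show "\<one>\<^bsub>BG\<^esub> \<in> extensional XX" by (simp add: BijGroup_def)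
    fix p assume p: "p \<in> XX"
    then obtain x e where pe: "p = (x, e)" "x \<in> carrier G" by (auto simp: XX_def)
    show "A ws p = \<one>\<^bsub>BG\<^esub> p"
      using A_formula[OF wsS pe(2), of e] P1 P2 ev[OF pe(2)] BG_one[OF p] pe by simp
  qed
  then show ?thesis using eq by simp
qed

lemma univ_rep:
  "\<exists>(enc :: ('a \<times> bool \<Rightarrow> 'a \<times> bool) \<Rightarrow> 'a list) (H :: 'a list monoid).
     inj_on enc (Bij XX) \<and> group H \<and> enc \<in> hom BG H \<and> (\<exists>\<phi>\<in>hom G H. \<forall>s\<in>S. \<phi> s = enc (pis s))"
proof -
  obtain B :: "'a list set" where B: "finite B" "card B = card (Bij XX)"
    using infinite_arbitrarily_large[OF infinite_UNIV_listI] by blast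
  obtain enc where "bij_betw enc (Bij XX) B"
    using finite_same_card_bij[OF finite_Bij B(1)] B(2) by metis
  then have inj: "inj_on enc (Bij XX)" by (simp add: bij_betw_def)
  define H where "H = transH BG enc"
  have gH: "group H" and hom: "enc \<in> hom BG H"
    using transport_group[OF BG_group, of enc] inj by (simp_all add: BG_carrier H_def)
  have ghom: "group_hom BG H enc" using gH hom BG_group by (simp add: group_hom_def group_hom_axioms_def)
  define f where "f = (\<lambda>s. enc (pis s))"
  have fS: "f \<in> S \<rightarrow> carrier H"
    using pis_Bij hom by (auto simp: f_def hom_def BG_carrier)
  have rel: "\<forall>s\<in>S. \<forall>t\<in>S. \<forall>n::nat. (s \<otimes> t) [^] n = \<one> \<longrightarrow>
             (f s \<otimes>\<^bsub>H\<^esub> f t) [^]\<^bsub>H\<^esub> n = \<one>\<^bsub>H\<^esub>"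
  proof (intro ballI allI impI)
    fix s t and n :: nat assume s: "s \<in> S" and t: "t \<in> S" and st: "(s \<otimes> t) [^] n = \<one>"
    have c: "pis s \<in> carrier BG" "pis t \<in> carrier BG" using pis_Bij s t by (auto simp: BG_carrier)
    have "f s \<otimes>\<^bsub>H\<^esub> f t = enc (pis s \<otimes>\<^bsub>BG\<^esub> pis t)"
      using hom_mult[OF hom c] by (simp add: f_def)
    then have "(f s \<otimes>\<^bsub>H\<^esub> f t) [^]\<^bsub>H\<^esub> n = enc ((pis s \<otimes>\<^bsub>BG\<^esub> pis t) [^]\<^bsub>BG\<^esub> n)"
      using group_hom.hom_nat_pow[OF ghom, of "pis s \<otimes>\<^bsub>BG\<^esub> pis t" n] c
        group.is_monoid[OF BG_group] by (simp add: monoid.m_closed)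
    also have "\<dots> = \<one>\<^bsub>H\<^esub>" using pis_rel[OF s t st] group_hom.hom_one[OF ghom] by simp
    finally show "(f s \<otimes>\<^bsub>H\<^esub> f t) [^]\<^bsub>H\<^esub> n = \<one>\<^bsub>H\<^esub>" .
  qed
  have "\<exists>\<phi>\<in>hom G H. \<forall>s\<in>S. \<phi> s = f s"
    using cs gH fS rel unfolding coxeter_system_def by blast
  then show ?thesis using inj gH hom unfolding f_def by blast
qed

lemma A_invariant:
  assumes xs: "set xs \<subseteq> S" and ys: "set ys \<subseteq> S" and eq: "P xs = P ys"
  shows "A xs = A ys"
proof -
  obtain enc and H :: "'a list monoid" and \<phi> where inj: "inj_on enc (Bij XX)" and gH: "group H"
    and hom: "enc \<in> hom BG H" and phi: "\<phi> \<in> hom G H" and phis: "\<forall>s\<in>S. \<phi> s = enc (pis s)"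
    using univ_rep by blast
  have key: "\<phi> (P (rev zs)) = enc (A zs)" if zs: "set zs \<subseteq> S" for zs
  proof -
    have "\<phi> (P (rev zs)) = word_prod H (map \<phi> (rev zs))"
      using hom_word_prod[OF is_group gH phi, of "rev zs"] zs S_carr by auto
    also have "map \<phi> (rev zs) = map enc (map pis (rev zs))"
      using zs phis by auto
    also have "word_prod H (map enc (map pis (rev zs))) = enc (A zs)"
      using hom_word_prod[OF BG_group gH hom, of "map pis (rev zs)"] map_pis_carr[of "rev zs"] zs
      by (simp add: A_def)
    finally show ?thesis .
  qed
  have "P (rev xs) = P (rev ys)" using xs ys eq by (simp add: P_rev)
  then have "enc (A xs) = enc (A ys)" using key[OF xs] key[OF ys] by simp
  then show ?thesis using inj A_Bij[OF xs] A_Bij[OF ys] by (simp add: inj_on_def)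
qed

lemma cnt_invariant:
  assumes xs: "set xs \<subseteq> S" and ys: "set ys \<subseteq> S" and eq: "P xs = P ys" and x: "x \<in> carrier G"
  shows "odd (cntw xs x) = odd (cntw ys x)"
  using A_invariant[OF xs ys eq] A_formula[OF xs x, of False] A_formula[OF ys x, of False] by simp

end

lemma append_split3:
  "xs @ ys = a @ p # b \<Longrightarrow> (\<exists>b'. xs = a @ p # b' \<and> b = b' @ ys) \<or> (\<exists>a'. ys = a' @ p # b \<and> a = xs @ a')"
proof -
  assume h: "xs @ ys = a @ p # b"
  then obtain us where "xs = a @ us \<and> us @ ys = p # b \<or> xs @ us = a \<and> ys = us @ p # b"
    by (auto simp: append_eq_append_conv2)
  then show ?thesis
  proof
    assume u: "xs = a @ us \<and> us @ ys = p # b"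
    show ?thesis
    proof (cases us)
      case Nil then show ?thesis using u by auto
    next
      case (Cons q r) then show ?thesis using u by auto
    qed
  qed auto
qed

context fcox
begin

lemma refl_del: "set xs \<subseteq> S \<Longrightarrow> x \<in> carrier G \<Longrightarrow> cntw xs x > 0 \<Longrightarrow>
   \<exists>a p b. xs = a @ p # b \<and> x \<otimes> P xs = P (a @ b)"
proof (induct xs arbitrary: x)
  case Nil then show ?case by simp
next
  case (Cons c ys)
  have c: "c \<in> S" and ys: "set ys \<subseteq> S" using Cons.prems by auto
  show ?case
  proof (cases "x = c")
    case True
    then show ?thesis using c ys by (intro exI[of _ "[]"] exI[of _ c] exI[of _ ys]) simp
  next
    case False
    then have "cntw ys (c \<otimes> x \<otimes> c) > 0" using Cons.prems by simp
    have "\<exists>a p b. ys = a @ p # b \<and> (c \<otimes> x \<otimes> c) \<otimes> P ys = P (a @ b)"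
      by (rule Cons.hyps[OF ys]) (use c Cons.prems \<open>cntw ys (c \<otimes> x \<otimes> c) > 0\<close> in simp_all)
    then obtain a p b where ab: "ys = a @ p # b" "(c \<otimes> x \<otimes> c) \<otimes> P ys = P (a @ b)"
      by blast
    have abS: "set (a @ b) \<subseteq> S" using ys ab(1) by auto
    have "x \<otimes> P (c # ys) = c \<otimes> ((c \<otimes> x \<otimes> c) \<otimes> P ys)"
      using c ys Cons.prems by (simp add: m_assoc)
    also have "\<dots> = P ((c # a) @ b)" using ab(2) by simp
    finally show ?thesis using ab(1) by (intro exI[of _ "c # a"] exI[of _ p] exI[of _ b]) simp
  qed
qed

lemma exchange:
  assumes xs: "set xs \<subseteq> S" and red: "length xs = l (P xs)" and s: "s \<in> S"
    and le: "l (s \<otimes> P xs) \<le> l (P xs)"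
  shows "\<exists>a p b. xs = a @ p # b \<and> s \<otimes> P xs = P (a @ b)"
proof -
  define w where "w = P xs"
  have w: "w \<in> carrier G" using xs by (simp add: w_def)
  obtain ys where ys: "set ys \<subseteq> S" "length ys = l (s \<otimes> w)" "P ys = s \<otimes> w"
    using reduced_ex[of "s \<otimes> w"] s w by auto
  have e: "P xs = P (s # ys)" using ys s w by (simp add: w_def)
  have sysS: "set (s # ys) \<subseteq> S" using ys s by simp
  have "odd (cntw xs s) = odd (cntw (s # ys) s)"
    by (rule cnt_invariant[OF xs sysS e sc[OF s]])
  also have "cntw (s # ys) s = 1 + cntw ys s" using s by (simp add: m_assoc)
  finally have par: "odd (cntw xs s) = even (cntw ys s)" by simp
  show ?thesis
  proof (cases "cntw xs s > 0")
    case True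
    then show ?thesis using refl_del[OF xs sc[OF s]] by blast
  next
    case False
    then have "cntw ys s > 0" using par by (cases "cntw ys s") auto
    then obtain a p b where ab: "ys = a @ p # b" "s \<otimes> P ys = P (a @ b)"
      using refl_del[OF ys(1) sc[OF s]] by blast
    have "P (a @ b) = w" using ab(2) ys s w by simp
    then have "l w \<le> length (a @ b)" using l_le[of "a @ b"] ys(1) ab(1) by auto
    also have "\<dots> < length ys" using ab(1) by simp
    also have "\<dots> \<le> l w" using ys(2) le by (simp add: w_def)
    finally show ?thesis by simp
  qed
qed

lemma reduced_sub: "set xs \<subseteq> S \<Longrightarrow> \<exists>zs. set zs \<subseteq> set xs \<and> P zs = P xs \<and> length zs = l (P xs)"
proof (induct xs)
  case Nil then show ?case using len_one by simp
next
  case (Cons c ys)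
  have c: "c \<in> S" and ys: "set ys \<subseteq> S" using Cons.prems by auto
  obtain zs where zs: "set zs \<subseteq> set ys" "P zs = P ys" "length zs = l (P ys)"
    using Cons.hyps[OF ys] by blast
  have zsS: "set zs \<subseteq> S" using zs(1) ys by auto
  have Pc: "P ys \<in> carrier G" using ys by simp
  show ?case
  proof (cases "l (c \<otimes> P ys) \<le> l (P ys)")
    case False
    have "l (c \<otimes> P ys) \<le> length (c # zs)" using l_le[of "c # zs"] zsS c zs(2) by simp
    then have "length (c # zs) = l (P (c # ys))" using False zs(3) by simp
    then show ?thesis using zs by (intro exI[of _ "c # zs"]) auto
  next
    case True
    obtain a p b where ab: "zs = a @ p # b" "c \<otimes> P zs = P (a @ b)"
      using exchange[OF zsS _ c] zs True by auto
    have abS: "set (a @ b) \<subseteq> S" using zsS ab(1) by auto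
    have "l (c \<otimes> P ys) \<le> length (a @ b)" using l_le[OF abS] ab(2) zs(2) by simp
    moreover have "l (P ys) \<le> l (c \<otimes> P ys) + 1" using l_mult_ge[OF c Pc] .
    ultimately have "length (a @ b) = l (P (c # ys))" using zs(3) ab(1) by simp
    then show ?thesis using zs ab by (intro exI[of _ "a @ b"]) auto
  qed
qed

lemma coset_mem: "J \<subseteq> S \<Longrightarrow> y \<in> generate G J #> v \<longleftrightarrow> (\<exists>h\<in>generate G J. y = h \<otimes> v)"
  by (auto simp: r_coset_def)

lemma gen_sub: "J \<subseteq> S \<Longrightarrow> subgroup (generate G J) G"
  using generate_is_subgroup S_carr by blast

lemma additive:
  assumes J: "J \<subseteq> S" and v: "v \<in> carrier G" and u: "u \<in> generate G J #> v"
    and umin: "\<forall>y\<in>generate G J #> v. l u \<le> l y"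
  shows "set xs \<subseteq> J \<Longrightarrow> length xs = l (P xs) \<Longrightarrow> l (P xs \<otimes> u) = length xs + l u"
proof (induct xs)
  case Nil
  have "u \<in> carrier G" using u coset_mem[OF J] gen_sub[OF J] v by (auto dest: subgroup.mem_carrier)
  then show ?case by simp
next
  case (Cons s xs')
  have sub: "subgroup (generate G J) G" by (rule gen_sub[OF J])
  obtain h0 where h0: "h0 \<in> generate G J" "u = h0 \<otimes> v" using u coset_mem[OF J] by blast
  have h0c: "h0 \<in> carrier G" using h0 sub by (auto dest: subgroup.mem_carrier)
  have uc: "u \<in> carrier G" using h0 h0c v by simp
  have s: "s \<in> S" "s \<in> J" and xs'J: "set xs' \<subseteq> J" using Cons.prems J by auto
  have xs'S: "set xs' \<subseteq> S" using xs'J J by auto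
  have Pxc: "P xs' \<in> carrier G" using xs'S by simp
  have red': "length xs' = l (P xs')"
  proof -
    have "l (P xs') \<le> length xs'" by (rule l_le[OF xs'S])
    moreover have "l (P (s # xs')) \<le> l (P xs') + 1" using l_mult_le[OF s(1) Pxc] by simp
    ultimately show ?thesis using Cons.prems(2) by simp
  qed
  have IH: "l (P xs' \<otimes> u) = length xs' + l u" using Cons.hyps[OF xs'J red'] .
  obtain us where us: "set us \<subseteq> S" "length us = l u" "P us = u" using reduced_ex[OF uc] by blast
  have wS: "set (xs' @ us) \<subseteq> S" using xs'S us by auto
  have wP: "P (xs' @ us) = P xs' \<otimes> u" using xs'S us by (simp add: P_app)
  have wred: "length (xs' @ us) = l (P (xs' @ us))" using wP IH us by simp
  have gt: "l (s \<otimes> (P xs' \<otimes> u)) > l (P xs' \<otimes> u)"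
  proof (rule ccontr)
    assume "\<not> ?thesis"
    then obtain a p b where ab: "xs' @ us = a @ p # b" "s \<otimes> (P xs' \<otimes> u) = P (a @ b)"
      using exchange[OF wS wred s(1)] wP by auto
    from append_split3[OF ab(1)] show False
    proof
      assume "\<exists>b'. xs' = a @ p # b' \<and> b = b' @ us"
      then obtain b' where b': "xs' = a @ p # b'" "b = b' @ us" by blast
      have abS: "set (a @ b') \<subseteq> S" using xs'S b' by auto
      have "s \<otimes> P xs' \<otimes> u = s \<otimes> (P xs' \<otimes> u)" using s Pxc uc by (simp add: m_assoc)
      also have "\<dots> = P (a @ b' @ us)" using ab(2) b' by simp
      also have "\<dots> = P (a @ b') \<otimes> u" using abS us P_app[of "a @ b'" us] by simp
      finally have "s \<otimes> P xs' \<otimes> u = P (a @ b') \<otimes> u" .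
      then have "s \<otimes> P xs' = P (a @ b')" using s Pxc uc abS by (metis P_carr m_closed r_cancel sc)
      then have "l (P (s # xs')) \<le> length (a @ b')" using l_le[OF abS] by simp
      then show False using Cons.prems(2) b' by simp
    next
      assume "\<exists>a'. us = a' @ p # b \<and> a = xs' @ a'"
      then obtain a' where a': "us = a' @ p # b" "a = xs' @ a'" by blast
      have abS: "set (a' @ b) \<subseteq> S" using us a' by auto
      have eq: "s \<otimes> (P xs' \<otimes> u) = P xs' \<otimes> P (a' @ b)"
        using ab(2) a' abS xs'S by (simp add: P_app)
      define g where "g = inv (P xs') \<otimes> s \<otimes> P xs'"
      have gG: "g \<in> generate G J"
        using sub words_gen[OF xs'J] generate.incl[OF s(2), of G]
        by (simp add: g_def subgroup.m_closed subgroup.m_inv_closed)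
      have "P (a' @ b) = g \<otimes> u"
        using eq abS Pxc uc s by (simp add: g_def m_assoc inv_solve_left)
      also have "\<dots> = (g \<otimes> h0) \<otimes> v" using h0 gG sub v h0c
        by (simp add: m_assoc subgroup.mem_carrier)
      finally have "P (a' @ b) \<in> generate G J #> v"
        using coset_mem[OF J] gG h0 sub by (auto intro: subgroup.m_closed)
      then have "l u \<le> l (P (a' @ b))" using umin by blast
      also have "\<dots> \<le> length (a' @ b)" by (rule l_le[OF abS])
      also have "\<dots> < l u" using a' us by simp
      finally show False by simp
    qed
  qed
  have "l (s \<otimes> (P xs' \<otimes> u)) \<le> l (P xs' \<otimes> u) + 1" using l_mult_le[OF s(1)] Pxc uc by simp
  then have "l (s \<otimes> (P xs' \<otimes> u)) = length xs' + l u + 1" using gt IH by simp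
  then show ?case using s Pxc uc by (simp add: m_assoc)
qed

end

context fcox
begin

lemma min_rep_char:
  assumes J: "J \<subseteq> S" and v: "v \<in> carrier G"
  shows "min_rep G S J v \<in> generate G J #> v \<and>
    (\<forall>y \<in> generate G J #> v. y \<noteq> min_rep G S J v \<longrightarrow> l (min_rep G S J v) < l y)"
proof -
  define C where "C = generate G J #> v"
  have sub: "subgroup (generate G J) G" by (rule gen_sub[OF J])
  have vC: "v \<in> C" unfolding C_def using coset_mem[OF J, of v v] sub v
    by (auto intro!: bexI[of _ \<one>] subgroup.one_closed)
  obtain u where u: "u \<in> C" and umin: "\<forall>y. y \<in> C \<longrightarrow> l u \<le> l y"
    using ex_has_least_nat[of "\<lambda>y. y \<in> C" v l] vC by blast
  have strict: "\<forall>y\<in>C. y \<noteq> u \<longrightarrow> l u < l y"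
  proof (intro ballI impI)
    fix y assume y: "y \<in> C" and ne: "y \<noteq> u"
    show "l u < l y"
    proof (rule ccontr)
      assume "\<not> l u < l y"
      then have le: "l y \<le> l u" by simp
      obtain h where h: "h \<in> generate G J" "y = h \<otimes> v" using y coset_mem[OF J] C_def by blast
      obtain h' where h': "h' \<in> generate G J" "u = h' \<otimes> v" using u coset_mem[OF J] C_def by blast
      have hc: "h \<in> carrier G" "h' \<in> carrier G" using h h' sub by (auto dest: subgroup.mem_carrier)
      define x where "x = h \<otimes> inv h'"
      have xG: "x \<in> generate G J" using h h' sub by (simp add: x_def subgroup.m_closed subgroup.m_inv_closed)
      have yx: "y = x \<otimes> u" using h h' hc v by (simp add: x_def m_assoc flip: m_assoc[of "inv h'" h' v])
      obtain xs where xs: "set xs \<subseteq> J" "P xs = x" using gen_words[OF J xG] by blast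
      obtain zs where zs: "set zs \<subseteq> set xs" "P zs = P xs" "length zs = l (P xs)"
        using reduced_sub[of xs] xs J by auto
      have zsJ: "set zs \<subseteq> J" using zs xs by auto
      have "l (P zs \<otimes> u) = length zs + l u"
        using additive[OF J v _ _ zsJ] u umin zs C_def by auto
      then have "length zs = 0" using le yx zs xs by simp
      then have "x = \<one>" using zs xs by simp
      then show False using yx ne u h' hc v by simp
    qed
  qed
  have the: "min_rep G S J v = u"
    unfolding min_rep_def parabolic_def C_def[symmetric]
  proof (rule the_equality)
    show "u \<in> C \<and> (\<forall>y\<in>C. y \<noteq> u \<longrightarrow> l u < l y)" using u strict by blast
    fix u' assume u': "u' \<in> C \<and> (\<forall>y\<in>C. y \<noteq> u' \<longrightarrow> l u' < l y)"
    show "u' = u"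
    proof (rule ccontr)
      assume "u' \<noteq> u"
      then show False using u' u strict by force
    qed
  qed
  show ?thesis using the u strict C_def by simp
qed

lemma main:
  assumes K: "K \<subseteq> S" and w: "w \<in> min_reps G S K"
    and hyp: "\<forall>s \<in> S - K. min_rep G S (S - {s}) w = \<one>"
  shows "w = \<one>"
proof (rule ccontr)
  assume ne: "w \<noteq> \<one>"
  obtain v where v: "v \<in> carrier G" "w = min_rep G S K v" using w by (auto simp: min_reps_def)
  have subK: "subgroup (generate G K) G" by (rule gen_sub[OF K])
  note mc = min_rep_char[OF K v(1)]
  have wC: "w \<in> generate G K #> v" using mc v by simp
  have wmin: "\<forall>y\<in>generate G K #> v. y \<noteq> w \<longrightarrow> l w < l y" using mc v by simp
  obtain h where h: "h \<in> generate G K" "w = h \<otimes> v" using wC coset_mem[OF K] by blast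
  have hc: "h \<in> carrier G" using h subK by (auto dest: subgroup.mem_carrier)
  have wc: "w \<in> carrier G" using h hc v by simp
  obtain xs where xs: "set xs \<subseteq> S" "length xs = l w" "P xs = w" using reduced_ex[OF wc] by blast
  obtain s ys where sys: "xs = s # ys" using xs ne by (cases xs) auto
  have s: "s \<in> S" and ys: "set ys \<subseteq> S" using xs sys by auto
  have sw: "s \<otimes> w = P ys" using xs(3) sys s ys by (auto simp flip: m_assoc)
  have lsw: "l (s \<otimes> w) < l w" using l_le[OF ys] sw xs sys by simp
  show False
  proof (cases "s \<in> K")
    case True
    have "s \<otimes> h \<in> generate G K" using True h subK generate.incl[OF True, of G]
      by (simp add: subgroup.m_closed)
    moreover have "s \<otimes> w = (s \<otimes> h) \<otimes> v" using h hc v s by (simp add: m_assoc)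
    ultimately have "s \<otimes> w \<in> generate G K #> v" using coset_mem[OF K] by blast
    moreover have "s \<otimes> w \<noteq> w"
    proof
      assume "s \<otimes> w = w"
      then have "s = \<one>" using s wc r_cancel_one[of w s] by simp
      then show False using s one_notin by simp
    qed
    ultimately have "l w < l (s \<otimes> w)" using wmin by blast
    then show False using lsw by simp
  next
    case False
    define J where "J = S - {s}"
    have J: "J \<subseteq> S" by (simp add: J_def)
    have subJ: "subgroup (generate G J) G" by (rule gen_sub[OF J])
    have m1: "min_rep G S J w = \<one>" using hyp False s by (simp add: J_def)
    have "\<one> \<in> generate G J #> w" using min_rep_char[OF J wc] m1 by simp
    then obtain g where g: "g \<in> generate G J" "\<one> = g \<otimes> w" using coset_mem[OF J] by blast
    have gc: "g \<in> carrier G" using g subJ by (auto dest: subgroup.mem_carrier)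
    have e: "g \<otimes> w = \<one>" using g(2) by simp
    have "w = (inv g \<otimes> g) \<otimes> w" using l_inv[OF gc] l_one[OF wc] by argo
    also have "\<dots> = inv g \<otimes> (g \<otimes> w)" using gc wc by (intro m_assoc) auto
    finally have "w = inv g" using e gc by simp
    then have wJ: "w \<in> generate G J" using g subJ by (simp add: subgroup.m_inv_closed)
    obtain js where js: "set js \<subseteq> J" "P js = w" using gen_words[OF J wJ] by blast
    obtain zs where zs: "set zs \<subseteq> set js" "P zs = P js" "length zs = l (P js)"
      using reduced_sub[of js] js J by auto
    have zsJ: "set zs \<subseteq> J" using zs js by auto
    have zsS: "set zs \<subseteq> S" using zsJ J by auto
    obtain a p b where ab: "zs = a @ p # b" "s \<otimes> P zs = P (a @ b)"
      using exchange[OF zsS _ s] zs js lsw by force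
    have aJ: "set a \<subseteq> J" and bJ: "set b \<subseteq> J" and pJ: "p \<in> J" using ab zsJ by auto
    have aS: "set a \<subseteq> S" and bS: "set b \<subseteq> S" and pS: "p \<in> S" using aJ bJ pJ J by auto
    have "s \<otimes> (P a \<otimes> (p \<otimes> P b)) = P a \<otimes> P b"
      using ab aS bS pS by (simp add: P_app)
    then have "(s \<otimes> P a \<otimes> p) \<otimes> P b = P a \<otimes> P b"
      using aS bS pS s by (simp add: m_assoc)
    then have e1: "s \<otimes> P a \<otimes> p = P a"
      using aS bS pS s r_cancel[of "P b" "s \<otimes> P a \<otimes> p" "P a"] by simp
    have "s = P a \<otimes> p \<otimes> inv (P a)"
    proof -
      have "(s \<otimes> P a \<otimes> p) \<otimes> p = s \<otimes> P a" using aS pS s by (simp add: m_assoc)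
      then have "P a \<otimes> p = s \<otimes> P a" using e1 by simp
      then show ?thesis using aS pS s inv_solve_right[of s "P a \<otimes> p" "P a"] by simp
    qed
    also have "\<dots> = P (a @ [p] @ rev a)" using aS pS by (simp add: P_app P_rev m_assoc)
    finally have sP: "s = P (a @ [p] @ rev a)" .
    have wsJ: "set (a @ [p] @ rev a) \<subseteq> J" using aJ pJ by auto
    obtain qs where qs: "set qs \<subseteq> set (a @ [p] @ rev a)" "P qs = s" "length qs = l s"
      using reduced_sub[of "a @ [p] @ rev a"] wsJ J sP by auto
    have "l s \<le> 1" using l_le[of "[s]"] s by simp
    moreover have "l s \<noteq> 0" using l_zero[of s] s one_notin by auto
    ultimately have "length qs = 1" using qs by simp
    then obtain q where "qs = [q]" by (cases qs) auto
    then have qJ: "q \<in> J" using qs wsJ by auto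
    then have qc: "q \<in> carrier G" using J by auto
    have "q = s" using qs \<open>qs = [q]\<close> qc by simp
    then have "q = s" "q \<in> J" using qJ by auto
    then show False by (simp add: J_def)
  qed
qed

end

theorem lemma3p6:
  fixes W :: "('a, 'b) monoid_scheme" and S K :: "'a set" and w :: 'a
  assumes "coxeter_system W S"
    and "finite (carrier W)"
    and "K \<subseteq> S"
    and "w \<in> min_reps W S K"
    and "\<forall>s \<in> S - K. min_rep W S (S - {s}) w = \<one>\<^bsub>W\<^esub>"
  shows "w = \<one>\<^bsub>W\<^esub>"
proof -
  have "group W" using assms(1) by (simp add: coxeter_system_def)
  then interpret fcox W S
    using assms(1,2) by (simp add: fcox_def fcox_axioms_def)
  show ?thesis using main assms(3-5) by blast
qed

end
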